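(* The consecutive patterns $110$ and $100$ are super-strongly Wilf equivalent.
   Context: An inversion sequence of length $n$ is an integer sequence $e=e_1\dots e_n$ with $0\le e_i<i$ for all $i$; $\mathbf{I}_n$ denotes the set of these. $\mathrm{Em}(110,e)$ is the set of $i$ with $e_i=e_{i+1}>e_{i+2}$, and $\mathrm{Em}(100,e)$ the set of $i$ with $e_i>e_{i+1}=e_{i+2}$. Two consecutive patterns $p,p'$ are super-strongly Wilf equivalent if $|\{e\in\mathbf{I}_n:\mathrm{Em}(p,e)=T\}|=|\{e\in\mathbf{I}_n:\mathrm{Em}(p',e)=T\}|$ for all $n$ and all $T\subseteq[n]$. *)

theory Defs
  imports Main
begin

text \<open>Inversion sequences of length n, stored as lists; the paper's e_i is e ! (i - 1).\<close>
definition inv_seqs :: "nat \<Rightarrow> nat list set" where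
  "inv_seqs n = {e. length e = n \<and> (\<forall>i<n. e ! i < i + 1)}"

definition Em110 :: "nat list \<Rightarrow> nat set" where
  "Em110 e = {i. 1 \<le> i \<and> i + 2 \<le> length e \<and>
      e ! (i - 1) = e ! i \<and> e ! i > e ! (i + 1)}"

definition Em100 :: "nat list \<Rightarrow> nat set" where
  "Em100 e = {i. 1 \<le> i \<and> i + 2 \<le> length e \<and>
      e ! (i - 1) > e ! i \<and> e ! i = e ! (i + 1)}"

end

theory Submission
  imports Defs "HOL-Library.Multiset"
begin


datatype L = A | B | C

definition cmpl :: "nat \<Rightarrow> nat \<Rightarrow> L" where
  "cmpl p y = (if y = p then A else if p < y then C else B)"

fun ea :: "nat \<Rightarrow> nat list \<Rightarrow> L list" where
  "ea p [] = []"
| "ea p (y # r) = cmpl p y # ea y r"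

fun va :: "nat \<Rightarrow> nat list \<Rightarrow> nat list" where
  "va p [] = []"
| "va p (y # r) = (if y = p then va y r else y # va y r)"

fun da :: "nat \<Rightarrow> nat list \<Rightarrow> L list \<Rightarrow> nat list" where
  "da p vs [] = []"
| "da p vs (A # U) = p # da p vs U"
| "da p [] (u # U) = p # da p [] U"
| "da p (v # vs) (u # U) = v # da v vs U"

fun ok :: "nat \<Rightarrow> nat list \<Rightarrow> L list \<Rightarrow> bool" where
  "ok p vs [] = (vs = [])"
| "ok p vs (A # U) = ok p vs U"
| "ok p [] (u # U) = False"
| "ok p (v # vs) (B # U) = (v < p \<and> ok v vs U)"
| "ok p (v # vs) (C # U) = (p < v \<and> ok v vs U)"

lemma length_ea[simp]: "length (ea p r) = length r"
  by (induction r arbitrary: p) auto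

lemma length_da[simp]: "length (da p vs U) = length U"
proof (induction U arbitrary: p vs)
  case Nil then show ?case by simp
next
  case (Cons u U) then show ?case by (cases u; cases vs) auto
qed

lemma ok_filter: "ok p vs U = ok p vs (filter (\<lambda>u. u \<noteq> A) U)"
proof (induction U arbitrary: p vs)
  case Nil then show ?case by simp
next
  case (Cons u U) then show ?case by (cases u; cases vs) auto
qed

lemma ea_da: "ok p vs U \<Longrightarrow> ea p (da p vs U) = U"
proof (induction U arbitrary: p vs)
  case Nil then show ?case by simp
next
  case (Cons u U) then show ?case by (cases u; cases vs) (auto simp: cmpl_def)
qed

lemma va_da: "ok p vs U \<Longrightarrow> va p (da p vs U) = vs"
proof (induction U arbitrary: p vs)
  case Nil then show ?case by simp
next
  case (Cons u U) then show ?case by (cases u; cases vs) auto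
qed

lemma da_ea: "da p (va p r) (ea p r) = r"
  by (induction r arbitrary: p) (auto simp: cmpl_def)

lemma ok_ea: "ok p (va p r) (ea p r)"
  by (induction r arbitrary: p) (auto simp: cmpl_def)

lemma da_append: "da p vs (U1 @ U2) =
   da p (take (length (filter (\<lambda>u. u \<noteq> A) U1)) vs) U1 @
   da (last (p # take (length (filter (\<lambda>u. u \<noteq> A) U1)) vs))
      (drop (length (filter (\<lambda>u. u \<noteq> A) U1)) vs) U2"
proof (induction U1 arbitrary: p vs)
  case Nil then show ?case by simp
next
  case (Cons u U) then show ?case by (cases u; cases vs) auto
qed

lemma ok_append: "ok p vs (U1 @ U2) =
   (ok p (take (length (filter (\<lambda>u. u \<noteq> A) U1)) vs) U1 \<and>
   ok (last (p # take (length (filter (\<lambda>u. u \<noteq> A) U1)) vs))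
      (drop (length (filter (\<lambda>u. u \<noteq> A) U1)) vs) U2)"
proof (induction U1 arbitrary: p vs)
  case Nil then show ?case by simp
next
  case (Cons u U) then show ?case by (cases u; cases vs) auto
qed

lemma ok_noC_le: "ok p vs U \<Longrightarrow> C \<notin> set U \<Longrightarrow> z \<in> set (da p vs U) \<Longrightarrow> z \<le> p"
proof (induction U arbitrary: p vs)
  case Nil then show ?case by simp
next
  case (Cons u U) then show ?case
    by (cases u; cases vs) (auto, meson less_imp_le_nat order.trans)
qed




fun sw :: "L \<Rightarrow> L \<Rightarrow> nat \<Rightarrow> nat \<Rightarrow> L list \<Rightarrow> L list" where
  "sw x y p q [] = replicate q y @ replicate p x"
| "sw x y p q (u # W) = (if u = x then (if q = 0 then sw x y (Suc p) 0 W
       else replicate q y @ replicate p x @ sw x y 1 0 W) else sw x y p (Suc q) W)"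

definition seg :: "L \<Rightarrow> L \<Rightarrow> nat \<times> nat \<Rightarrow> L list" where
  "seg x y pq = replicate (fst pq) x @ replicate (snd pq) y"

definition cat :: "L \<Rightarrow> L \<Rightarrow> (nat \<times> nat) list \<Rightarrow> L list" where
  "cat x y S = concat (map (seg x y) S)"

definition good :: "(nat \<times> nat) list \<Rightarrow> bool" where
  "good S = (\<forall>pq \<in> set S. 0 < fst pq \<and> 0 < snd pq)"

definition h :: "L \<Rightarrow> L \<Rightarrow> L list \<Rightarrow> L list" where
  "h x y w = butlast (tl (sw x y 0 0 (x # w @ [y])))"

definition M :: "L \<Rightarrow> L \<Rightarrow> L list \<Rightarrow> nat set" where
  "M u v W = {i. Suc i < length W \<and> W ! i = u \<and> W ! Suc i = v}"

lemma cat_Nil[simp]: "cat x y [] = []" by (simp add: cat_def)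
lemma cat_Cons[simp]: "cat x y (pq # S) = replicate (fst pq) x @ replicate (snd pq) y @ cat x y S"
  by (simp add: cat_def seg_def)
lemma good_Cons[simp]: "good (pq # S) = (0 < fst pq \<and> 0 < snd pq \<and> good S)"
  by (auto simp: good_def)
lemma good_Nil[simp]: "good []" by (simp add: good_def)

lemma sw_rep_x: "sw x y p 0 (replicate k x @ W) = sw x y (p + k) 0 W"
  by (induction k arbitrary: p) auto

lemma sw_rep_y: "x \<noteq> y \<Longrightarrow> sw x y p q (replicate k y @ W) = sw x y p (q + k) W"
  by (induction k arbitrary: q) auto

lemma sw_cat_gen: "x \<noteq> y \<Longrightarrow> good S \<Longrightarrow> 0 < q \<Longrightarrow>
   sw x y p q (cat x y S) = replicate q y @ replicate p x @ cat y x (map prod.swap S)"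
proof (induction S arbitrary: p q)
  case Nil then show ?case by simp
next
  case (Cons pq S)
  obtain a b where pq: "pq = (a, b)" by (cases pq)
  with Cons have a: "0 < a" "0 < b" by auto
  then obtain a' where a': "a = Suc a'" by (cases a) auto
  have "sw x y p q (cat x y (pq # S)) = replicate q y @ replicate p x @ sw x y 1 0 (replicate a' x @ replicate b y @ cat x y S)"
    using Cons.prems pq a' by simp
  also have "sw x y 1 0 (replicate a' x @ replicate b y @ cat x y S) = sw x y a b (cat x y S)"
    using Cons.prems a' by (simp add: sw_rep_x sw_rep_y)
  also have "\<dots> = replicate b y @ replicate a x @ cat y x (map prod.swap S)"
    using Cons a by simp
  finally show ?case using pq by simp
qed

lemma sw_cat: "x \<noteq> y \<Longrightarrow> good S \<Longrightarrow> sw x y 0 0 (cat x y S) = cat y x (map prod.swap S)"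
proof (cases S)
  case Nil then show ?thesis by simp
next
  case (Cons pq S')
  assume xy: "x \<noteq> y" and g: "good S"
  obtain a b where pq: "pq = (a, b)" by (cases pq)
  with Cons g have a: "0 < a" "0 < b" "good S'" by auto
  have "sw x y 0 0 (cat x y S) = sw x y a b (cat x y S')"
    using Cons pq xy by (simp add: sw_rep_x sw_rep_y)
  also have "\<dots> = cat y x (map prod.swap S)"
    using sw_cat_gen[OF xy a(3) a(2)] Cons pq by simp
  finally show ?thesis .
qed

lemma good_swap: "good S \<Longrightarrow> good (map prod.swap S)"
  by (auto simp: good_def)

lemma swap_swap: "map prod.swap (map prod.swap S) = S"
  by (induction S) auto

lemma cat_exists: "x \<noteq> y \<Longrightarrow> set W \<subseteq> {x, y} \<Longrightarrow> W \<noteq> [] \<Longrightarrow> last W = y \<Longrightarrow>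
   \<exists>S q. good S \<and> W = replicate q y @ cat x y S \<and> (q = 0 \<longrightarrow> S \<noteq> [])"
proof (induction W)
  case Nil then show ?case by simp
next
  case (Cons u W)
  show ?case
  proof (cases "W = []")
    case True
    with Cons have "u = y" by simp
    with True show ?thesis by (rule_tac x="[]" in exI, rule_tac x=1 in exI) simp
  next
    case False
    with Cons obtain S q where S: "good S" "W = replicate q y @ cat x y S" "q = 0 \<longrightarrow> S \<noteq> []"
      by auto
    have "u = x \<or> u = y" using Cons.prems by auto
    then show ?thesis
    proof
      assume u: "u = y"
      show ?thesis using S u by (rule_tac x=S in exI, rule_tac x="Suc q" in exI) simp
    next
      assume u: "u = x"
      show ?thesis
      proof (cases q)
        case 0
        with S obtain a b S' where S': "S = (a, b) # S'" by (cases S) auto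
        show ?thesis using S S' 0 u
          by (rule_tac x="(Suc a, b) # S'" in exI, rule_tac x=0 in exI) simp
      next
        case (Suc q')
        show ?thesis using S Suc u
          by (rule_tac x="(1, q) # S" in exI, rule_tac x=0 in exI) simp
      qed
    qed
  qed
qed

lemma cat_exists2: "x \<noteq> y \<Longrightarrow> set w \<subseteq> {x, y} \<Longrightarrow>
   \<exists>S. good S \<and> S \<noteq> [] \<and> x # w @ [y] = cat x y S"
proof -
  assume xy: "x \<noteq> y" and w: "set w \<subseteq> {x, y}"
  from cat_exists[OF xy, of "x # w @ [y]"] w obtain S q where
    S: "good S" "x # w @ [y] = replicate q y @ cat x y S" "q = 0 \<longrightarrow> S \<noteq> []" by auto
  have "q = 0" using S(2) xy by (cases q) auto
  with S show ?thesis by auto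
qed

lemma length_cat_swap: "length (cat y x (map prod.swap S)) = length (cat x y S)"
  by (induction S) auto

lemma mset_cat_swap: "mset (cat y x (map prod.swap S)) = mset (cat x y S)"
  by (induction S) (auto simp: ac_simps)

lemma hd_cat: "good S \<Longrightarrow> S \<noteq> [] \<Longrightarrow> hd (cat x y S) = x"
  by (cases S) auto

lemma cat_Nil_iff: "good S \<Longrightarrow> cat x y S = [] \<longleftrightarrow> S = []"
  by (cases S) auto

lemma last_cat: "good S \<Longrightarrow> S \<noteq> [] \<Longrightarrow> last (cat x y S) = y"
proof (induction S)
  case Nil then show ?case by simp
next
  case (Cons pq S)
  then show ?case using cat_Nil_iff[of S x y] by (cases "S = []") auto
qed





lemma M_append: "M u v (U @ V) = M u v U \<union> (\<lambda>i. i + length U) ` M u v V \<union>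
   {i. U \<noteq> [] \<and> V \<noteq> [] \<and> i = length U - 1 \<and> last U = u \<and> hd V = v}"
proof (intro set_eqI iffI)
  fix i assume "i \<in> M u v (U @ V)"
  hence i: "Suc i < length U + length V" "(U @ V) ! i = u" "(U @ V) ! Suc i = v" by (auto simp: M_def)
  consider "Suc i < length U" | "Suc i = length U" | "length U \<le> i" by linarith
  then show "i \<in> M u v U \<union> (\<lambda>i. i + length U) ` M u v V \<union>
   {i. U \<noteq> [] \<and> V \<noteq> [] \<and> i = length U - 1 \<and> last U = u \<and> hd V = v}"
  proof cases
    case 1 then show ?thesis using i by (auto simp: M_def nth_append)
  next
    case 2
    have U: "U \<noteq> []" using 2 by auto
    have V: "V \<noteq> []" using 2 i by auto
    have "last U = U ! (length U - 1)" using U by (rule last_conv_nth)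
    also have "length U - 1 = i" using 2 by simp
    finally have "last U = u" using i 2 by (simp add: nth_append)
    moreover have "hd V = v" using i 2 V by (simp add: nth_append hd_conv_nth)
    ultimately have "U \<noteq> [] \<and> V \<noteq> [] \<and> last U = u \<and> hd V = v" using U V by simp
    then show ?thesis using 2 by auto
  next
    case 3
    then have "i - length U \<in> M u v V" using i by (auto simp: M_def nth_append Suc_diff_le)
    then show ?thesis using 3 by (auto intro!: image_eqI[where x="i - length U"])
  qed
next
  fix i assume "i \<in> M u v U \<union> (\<lambda>i. i + length U) ` M u v V \<union>
   {i. U \<noteq> [] \<and> V \<noteq> [] \<and> i = length U - 1 \<and> last U = u \<and> hd V = v}"
  then show "i \<in> M u v (U @ V)"
    by (auto simp: M_def nth_append last_conv_nth hd_conv_nth)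
qed

lemma M_seg: "x \<noteq> y \<Longrightarrow> M y x (replicate p x @ replicate q y) = {}"
  by (auto simp: M_def nth_append)

lemma M_cat: "x \<noteq> y \<Longrightarrow> good S \<Longrightarrow> M y x (cat x y S) = M x y (cat y x (map prod.swap S))"
proof (induction S)
  case Nil then show ?case by (simp add: M_def)
next
  case (Cons pq S)
  obtain a b where pq: "pq = (a, b)" by (cases pq)
  with Cons have a: "0 < a" "0 < b" "good S" by auto
  define X where "X = replicate a x @ replicate b y"
  define Y where "Y = replicate b y @ replicate a x"
  have X: "X \<noteq> []" "last X = y" "length X = a + b" "M y x X = {}"
    using a M_seg[OF Cons.prems(1)] by (auto simp: X_def)
  have Y: "Y \<noteq> []" "last Y = x" "length Y = a + b" "M x y Y = {}"
    using a M_seg[of y x] Cons.prems(1) by (auto simp: Y_def)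
  have e1: "cat x y (pq # S) = X @ cat x y S" using pq by (simp add: X_def)
  have e2: "cat y x (map prod.swap (pq # S)) = Y @ cat y x (map prod.swap S)"
    using pq by (simp add: Y_def)
  have gs: "good (map prod.swap S)" using a(3) by (rule good_swap)
  show ?case
    unfolding e1 e2 M_append
    using Cons.IH[OF Cons.prems(1) a(3)] X Y Cons.prems(1)
      cat_Nil_iff[OF a(3)] cat_Nil_iff[OF gs] hd_cat[OF a(3)] hd_cat[OF gs]
    by auto
qed

lemma M_bt: "M u v (butlast (tl R)) = {i. Suc i \<in> M u v R \<and> i + 3 < length R}"
  by (auto simp: M_def nth_butlast nth_tl)

lemma cons_bt: "R \<noteq> [] \<Longrightarrow> hd R = y \<Longrightarrow> last R = x \<Longrightarrow> 2 \<le> length R \<Longrightarrow> y # butlast (tl R) @ [x] = R"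
proof -
  assume a: "R \<noteq> []" "hd R = y" "last R = x" "2 \<le> length R"
  then obtain R' where R: "R = y # R'" by (cases R) auto
  with a have "R' \<noteq> []" "last R' = x" by auto
  then have "butlast R' @ [x] = R'" by (metis append_butlast_last_id)
  then show ?thesis using R by simp
qed

lemma h_props:
  assumes xy: "x \<noteq> y" and w: "set w \<subseteq> {x, y}"
  shows "mset (h x y w) = mset w" "M x y (h x y w) = M y x w" "h y x (h x y w) = w"
proof -
  obtain S where S: "good S" "S \<noteq> []" "x # w @ [y] = cat x y S" using cat_exists2[OF xy w] by blast
  define R where "R = cat y x (map prod.swap S)"
  have gs: "good (map prod.swap S)" using S by (simp add: good_swap)
  have swR: "sw x y 0 0 (x # w @ [y]) = R" using S sw_cat[OF xy S(1)] R_def by simp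
  have hR: "h x y w = butlast (tl R)" using swR by (simp add: h_def)
  have lenR: "length R = length w + 2" using length_cat_swap[of y x S] S(3) R_def
    by (metis Suc_eq_plus1 add_2_eq_Suc' length_Cons length_append_singleton)
  have Rne: "R \<noteq> []" using lenR by auto
  have hdR: "hd R = y" using hd_cat[OF gs] S R_def by simp
  have lastR: "last R = x" using last_cat[OF gs] S R_def by simp
  have Req: "y # h x y w @ [x] = R" using cons_bt[OF Rne hdR lastR] lenR hR by simp
  have "mset R = mset (x # w @ [y])" using mset_cat_swap[of y x S] S(3) R_def by simp
  then show "mset (h x y w) = mset w" using Req[symmetric] by simp
  have wbt: "w = butlast (tl (x # w @ [y]))" by simp
  have "M y x w = {i. Suc i \<in> M y x (x # w @ [y]) \<and> i + 3 < length (x # w @ [y])}"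
    by (subst wbt, rule M_bt)
  also have "\<dots> = {i. Suc i \<in> M x y R \<and> i + 3 < length R}"
  proof -
    have MW: "M y x (x # w @ [y]) = M x y R" using M_cat[OF xy S(1)] S(3) R_def by simp
    have LW: "length (x # w @ [y]) = length R" using lenR by simp
    show ?thesis by (simp only: MW LW)
  qed
  also have "\<dots> = M x y (h x y w)" using hR M_bt by simp
  finally show "M x y (h x y w) = M y x w" by simp
  have "h y x (h x y w) = butlast (tl (sw y x 0 0 R))" using Req by (simp add: h_def)
  also have "sw y x 0 0 R = cat x y S" using sw_cat[of y x, OF _ gs] xy R_def by (simp add: swap_swap)
  finally show "h y x (h x y w) = w" using S(3)[symmetric] by simp
qed




lemma setw_xy: "x \<noteq> C \<Longrightarrow> y \<noteq> C \<Longrightarrow> x \<noteq> y \<Longrightarrow> C \<notin> set w \<Longrightarrow> set w \<subseteq> {x, y}"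
proof
  fix u assume a: "x \<noteq> C" "y \<noteq> C" "x \<noteq> y" "C \<notin> set w" "u \<in> set w"
  then show "u \<in> {x, y}" by (cases u; cases x; cases y) auto
qed

lemma filter_AB: "set xs \<subseteq> {A, B} \<Longrightarrow> filter (\<lambda>u. u \<noteq> A) xs = replicate (count (mset xs) B) B"
proof (induction xs)
  case Nil then show ?case by simp
next
  case (Cons u xs) then show ?case by (cases u) auto
qed

lemma AB_xy: "x \<noteq> C \<Longrightarrow> y \<noteq> C \<Longrightarrow> x \<noteq> y \<Longrightarrow> {x, y} = {A, B}"
  by (cases x; cases y) auto

lemma filter_h: assumes xy: "x \<noteq> C" "y \<noteq> C" "x \<noteq> y" and w: "C \<notin> set w"
  shows "filter (\<lambda>u. u \<noteq> A) (h x y w) = filter (\<lambda>u. u \<noteq> A) w"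
proof -
  have sw: "set w \<subseteq> {x, y}" using setw_xy[OF xy w] .
  have m: "mset (h x y w) = mset w" using h_props(1)[OF xy(3) sw] .
  have sh: "set (h x y w) = set w" using m by (metis set_mset_mset)
  have "set w \<subseteq> {A, B}" using sw AB_xy[OF xy] by simp
  then show ?thesis using filter_AB[of w] filter_AB[of "h x y w"] m sh by simp
qed

lemma noC_h: assumes xy: "x \<noteq> C" "y \<noteq> C" "x \<noteq> y" and w: "C \<notin> set w"
  shows "C \<notin> set (h x y w)"
proof -
  have sw: "set w \<subseteq> {x, y}" using setw_xy[OF xy w] .
  have m: "mset (h x y w) = mset w" using h_props(1)[OF xy(3) sw] .
  then have "set (h x y w) = set w" by (metis set_mset_mset)
  then show ?thesis using w by simp
qed

fun PT2 :: "L \<Rightarrow> L \<Rightarrow> L list \<Rightarrow> L list \<Rightarrow> L list" where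
  "PT2 x y acc [] = h x y (rev acc)"
| "PT2 x y acc (u # r) = (if u = C then h x y (rev acc) @ C # PT2 x y [] r else PT2 x y (u # acc) r)"

definition PT :: "L \<Rightarrow> L \<Rightarrow> L list \<Rightarrow> L list" where
  "PT x y U = PT2 x y [] U"

lemma PT2_run: "C \<notin> set w \<Longrightarrow> PT2 x y acc (w @ C # r) = h x y (rev acc @ w) @ C # PT x y r"
  by (induction w arbitrary: acc) (auto simp: PT_def)

lemma PT2_last: "C \<notin> set w \<Longrightarrow> PT2 x y acc w = h x y (rev acc @ w)"
  by (induction w arbitrary: acc) auto

lemma PT_run: "C \<notin> set w \<Longrightarrow> PT x y (w @ C # r) = h x y w @ C # PT x y r"
  by (simp add: PT_def PT2_run)

lemma PT_last: "C \<notin> set w \<Longrightarrow> PT x y w = h x y w"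
  by (simp add: PT_def PT2_last)

lemma run_induct:
  assumes "\<And>w. C \<notin> set w \<Longrightarrow> P w" "\<And>w r. C \<notin> set w \<Longrightarrow> P r \<Longrightarrow> P (w @ C # r)"
  shows "P U"
proof (induction U rule: length_induct)
  case (1 U)
  show ?case
  proof (cases "C \<in> set U")
    case True
    then obtain w r where U: "U = w @ C # r" "C \<notin> set w" using split_list_first by fast
    then have "P r" using 1 by auto
    then show ?thesis using assms(2) U by simp
  next
    case False then show ?thesis using assms(1) by simp
  qed
qed

lemma length_h: "x \<noteq> y \<Longrightarrow> set w \<subseteq> {x, y} \<Longrightarrow> length (h x y w) = length w"
  using h_props(1) by (metis size_mset)

context
  fixes x y :: L
  assumes xy: "x \<noteq> C" "y \<noteq> C" "x \<noteq> y"
begin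

lemma length_PT: "length (PT x y U) = length U"
proof (induction U rule: run_induct)
  case (1 w) then show ?case using length_h[OF xy(3) setw_xy[OF xy]] by (simp add: PT_last)
next
  case (2 w r) then show ?case using length_h[OF xy(3) setw_xy[OF xy]] by (simp add: PT_run)
qed

lemma filter_PT: "filter (\<lambda>u. u \<noteq> A) (PT x y U) = filter (\<lambda>u. u \<noteq> A) U"
proof (induction U rule: run_induct)
  case (1 w) then show ?case using filter_h[OF xy] by (simp add: PT_last)
next
  case (2 w r) then show ?case using filter_h[OF xy] by (simp add: PT_run)
qed

lemma M_C: "u \<noteq> C \<Longrightarrow> v \<noteq> C \<Longrightarrow> M u v (w @ C # r) = M u v w \<union> (\<lambda>i. i + Suc (length w)) ` M u v r"
proof -
  assume uv: "u \<noteq> C" "v \<noteq> C"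
  have m1: "M u v [C] = {}" by (auto simp: M_def)
  have "M u v (C # r) = (\<lambda>i. i + 1) ` M u v r"
    using M_append[of u v "[C]" r] m1 uv by auto
  then show ?thesis using M_append[of u v w "C # r"] uv by (auto simp: image_image)
qed

lemma M_PT: "M x y (PT x y U) = M y x U"
proof (induction U rule: run_induct)
  case (1 w) then show ?case using h_props(2)[OF xy(3) setw_xy[OF xy]] by (simp add: PT_last)
next
  case (2 w r)
  have "M x y (PT x y (w @ C # r)) = M x y (h x y w @ C # PT x y r)" using 2 by (simp add: PT_run)
  also have "\<dots> = M x y (h x y w) \<union> (\<lambda>i. i + Suc (length w)) ` M x y (PT x y r)"
    using M_C[OF xy(1,2)] length_h[OF xy(3) setw_xy[OF xy 2(1)]] by simp
  also have "\<dots> = M y x (w @ C # r)"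
    using M_C[OF xy(2,1)] 2 h_props(2)[OF xy(3) setw_xy[OF xy 2(1)]] by simp
  finally show ?case .
qed

end

lemma PT_inv: assumes xy: "x \<noteq> C" "y \<noteq> C" "x \<noteq> y" shows "PT y x (PT x y U) = U"
proof (induction U rule: run_induct)
  case (1 w) then show ?case
    using h_props(3)[OF xy(3) setw_xy[OF xy]] noC_h[OF xy] by (simp add: PT_last)
next
  case (2 w r) then show ?case
    using h_props(3)[OF xy(3) setw_xy[OF xy]] noC_h[OF xy] by (simp add: PT_run)
qed




lemma valid_PT:
  assumes xy: "x \<noteq> C" "y \<noteq> C" "x \<noteq> y"
  shows "\<forall>p vs off. ok p vs U \<longrightarrow> p \<le> off \<longrightarrow> (\<forall>j<length U. da p vs U ! j \<le> Suc (j + off)) \<longrightarrow>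
     (\<forall>j<length U. da p vs (PT x y U) ! j \<le> Suc (j + off))"
proof (induction U rule: run_induct)
  case (1 w)
  show ?case
  proof (intro allI impI)
    fix p vs off j
    assume o: "ok p vs w" "p \<le> off" and j: "j < length w"
    have o2: "ok p vs (h x y w)" using o(1) ok_filter filter_h[OF xy 1] by metis
    have "da p vs (h x y w) ! j \<in> set (da p vs (h x y w))"
      using j length_h[OF xy(3) setw_xy[OF xy 1]] by simp
    then have "da p vs (h x y w) ! j \<le> p" using ok_noC_le[OF o2 noC_h[OF xy 1]] by blast
    then show "da p vs (PT x y w) ! j \<le> Suc (j + off)" using o(2) 1 by (simp add: PT_last)
  qed
next
  case (2 w r)
  show ?case
  proof (intro allI impI)
    fix p vs off j
    assume o: "ok p vs (w @ C # r)" "p \<le> off"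
      and hyp: "\<forall>j<length (w @ C # r). da p vs (w @ C # r) ! j \<le> Suc (j + off)"
      and j: "j < length (w @ C # r)"
    define k where "k = length (filter (\<lambda>u. u \<noteq> A) w)"
    have kh: "length (filter (\<lambda>u. u \<noteq> A) (h x y w)) = k" using filter_h[OF xy 2(1)] k_def by simp
    define vs1 where "vs1 = take k vs"
    define q where "q = last (p # vs1)"
    have ok1: "ok p vs1 w" and ok2: "ok q (drop k vs) (C # r)"
      using o(1) ok_append[of p vs w "C # r"] by (auto simp: k_def vs1_def q_def)
    then obtain v vs2 where dv: "drop k vs = v # vs2" by (cases "drop k vs") auto
    with ok2 have okr: "ok v vs2 r" by simp
    have lw: "length (h x y w) = length w" using length_h[OF xy(3) setw_xy[OF xy 2(1)]] .
    have D1: "da p vs (w @ C # r) = da p vs1 w @ v # da v vs2 r"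
      using da_append[of p vs w "C # r"] dv by (simp add: k_def vs1_def)
    have D2: "da p vs (PT x y (w @ C # r)) = da p vs1 (h x y w) @ v # da v vs2 (PT x y r)"
      using da_append[of p vs "h x y w" "C # PT x y r"] dv kh 2(1) by (simp add: vs1_def PT_run)
    have okh: "ok p vs1 (h x y w)" using ok1 ok_filter filter_h[OF xy 2(1)] by metis
    have vle: "v \<le> Suc (length w + off)" using hyp[rule_format, of "length w"] D1 by (simp add: nth_append)
    have hr: "\<forall>j<length r. da v vs2 r ! j \<le> Suc (j + (off + Suc (length w)))"
    proof (intro allI impI)
      fix i assume i: "i < length r"
      have "da p vs (w @ C # r) ! (Suc (length w) + i) \<le> Suc (Suc (length w) + i + off)"
        using hyp[rule_format, of "Suc (length w) + i"] i by simp
      then show "da v vs2 r ! i \<le> Suc (i + (off + Suc (length w)))"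
        using D1 by (simp add: nth_append)
    qed
    have IH: "\<forall>j<length r. da v vs2 (PT x y r) ! j \<le> Suc (j + (off + Suc (length w)))"
    proof -
      have vle': "v \<le> off + Suc (length w)" using vle by simp
      show ?thesis using 2(2) okr vle' hr by blast
    qed
    consider "j < length w" | "j = length w" | "length w < j" by linarith
    then show "da p vs (PT x y (w @ C # r)) ! j \<le> Suc (j + off)"
    proof cases
      case 1
      then have "da p vs1 (h x y w) ! j \<in> set (da p vs1 (h x y w))" using lw by simp
      then have "da p vs1 (h x y w) ! j \<le> p"
        using ok_noC_le[OF okh noC_h[OF xy 2(1)]] by blast
      then show ?thesis using D2 1 lw o(2) by (simp add: nth_append)
    next
      case 2 then show ?thesis using D2 lw vle by (simp add: nth_append)
    next
      case 3
      then obtain i where i: "j = Suc (length w + i)" using less_iff_Suc_add by blast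
      with j have "i < length r" by simp
      with IH have "da v vs2 (PT x y r) ! i \<le> Suc (i + (off + Suc (length w)))" by simp
      then show ?thesis using D2 lw i by (simp add: nth_append)
    qed
  qed
qed

definition Phi :: "L \<Rightarrow> L \<Rightarrow> nat list \<Rightarrow> nat list" where
  "Phi x y e = (case e of [] \<Rightarrow> [] | z # r \<Rightarrow> z # da z (va z r) (PT x y (ea z r)))"

lemma ea_nth: "j < length r \<Longrightarrow> ea p r ! j = cmpl ((p # r) ! j) (r ! j)"
proof (induction r arbitrary: p j)
  case Nil then show ?case by simp
next
  case (Cons a r) then show ?case by (cases j) auto
qed

lemma Em110_eq: "Em110 (z # r) = Suc ` M A B (ea z r)" (is "?L = ?R")
proof -
  have s: "Suc j \<in> Em110 (z # r) \<longleftrightarrow> j \<in> M A B (ea z r)" for j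
    by (auto simp: Em110_def M_def ea_nth cmpl_def split: if_splits)
  have "0 \<notin> ?L" by (simp add: Em110_def)
  show ?thesis
  proof (intro set_eqI iffI)
    fix i assume i: "i \<in> ?L"
    then obtain j where "i = Suc j" using \<open>0 \<notin> ?L\<close> by (cases i) auto
    then show "i \<in> ?R" using s i by auto
  next
    fix i assume "i \<in> ?R" then show "i \<in> ?L" using s by auto
  qed
qed

lemma Em100_eq: "Em100 (z # r) = Suc ` M B A (ea z r)" (is "?L = ?R")
proof -
  have s: "Suc j \<in> Em100 (z # r) \<longleftrightarrow> j \<in> M B A (ea z r)" for j
    by (auto simp: Em100_def M_def ea_nth cmpl_def split: if_splits)
  have "0 \<notin> ?L" by (simp add: Em100_def)
  show ?thesis
  proof (intro set_eqI iffI)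
    fix i assume i: "i \<in> ?L"
    then obtain j where "i = Suc j" using \<open>0 \<notin> ?L\<close> by (cases i) auto
    then show "i \<in> ?R" using s i by auto
  next
    fix i assume "i \<in> ?R" then show "i \<in> ?L" using s by auto
  qed
qed

context
  fixes x y :: L
  assumes xy: "x \<noteq> C" "y \<noteq> C" "x \<noteq> y"
begin

lemma ok_PT: "ok z (va z r) (PT x y (ea z r))"
  using ok_ea[of z r] ok_filter filter_PT[OF xy] by metis

lemma Phi_Cons: "ea z (da z (va z r) (PT x y (ea z r))) = PT x y (ea z r)"
  "va z (da z (va z r) (PT x y (ea z r))) = va z r"
  using ea_da[OF ok_PT] va_da[OF ok_PT] by auto

lemma Phi_inv: "Phi y x (Phi x y e) = e"
proof (cases e)
  case Nil then show ?thesis by (simp add: Phi_def)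
next
  case (Cons z r)
  have xy': "y \<noteq> C" "x \<noteq> C" "y \<noteq> x" using xy by auto
  show ?thesis using Cons Phi_Cons PT_inv[OF xy] by (simp add: Phi_def da_ea)
qed

lemma Phi_in: assumes e: "e \<in> inv_seqs n" shows "Phi x y e \<in> inv_seqs n"
proof (cases e)
  case Nil then show ?thesis using e by (simp add: Phi_def)
next
  case (Cons z r)
  have le: "length e = n" "\<forall>i<n. e ! i < i + 1" using e by (auto simp: inv_seqs_def)
  then have z: "z = 0" using Cons by force
  have hyp: "\<forall>j<length (ea z r). da z (va z r) (ea z r) ! j \<le> Suc (j + 0)"
  proof (intro allI impI)
    fix j assume "j < length (ea z r)"
    then have "Suc j < n" using le Cons by simp
    then have "e ! Suc j < Suc j + 1" using le by blast
    then show "da z (va z r) (ea z r) ! j \<le> Suc (j + 0)" using Cons by (simp add: da_ea)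
  qed
  have V: "\<forall>j<length (ea z r). da z (va z r) (PT x y (ea z r)) ! j \<le> Suc (j + 0)"
    using valid_PT[OF xy, of "ea z r"] ok_ea[of z r] z hyp by blast
  show ?thesis
    unfolding inv_seqs_def
  proof (intro CollectI conjI allI impI)
    show "length (Phi x y e) = n" using le Cons by (simp add: Phi_def length_PT[OF xy])
    fix i assume i: "i < n"
    show "Phi x y e ! i < i + 1"
    proof (cases i)
      case 0 then show ?thesis using Cons z by (simp add: Phi_def)
    next
      case (Suc j)
      then have "j < length (ea z r)" using i le Cons by simp
      then have "da z (va z r) (PT x y (ea z r)) ! j \<le> Suc j" using V by simp
      then show ?thesis using Suc Cons by (simp add: Phi_def)
    qed
  qed
qed

end

lemma Em_Phi1: "Em100 (Phi B A e) = Em110 e"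
proof (cases e)
  case Nil then show ?thesis by (simp add: Phi_def Em100_def Em110_def)
next
  case (Cons z r)
  have xy: "B \<noteq> C" "A \<noteq> C" "B \<noteq> A" by auto
  show ?thesis using Cons Phi_Cons[OF xy] M_PT[OF xy] by (simp add: Phi_def Em100_eq Em110_eq)
qed

lemma Em_Phi2: "Em110 (Phi A B e) = Em100 e"
proof (cases e)
  case Nil then show ?thesis by (simp add: Phi_def Em100_def Em110_def)
next
  case (Cons z r)
  have xy: "A \<noteq> C" "B \<noteq> C" "A \<noteq> B" by auto
  show ?thesis using Cons Phi_Cons[OF xy] M_PT[OF xy] by (simp add: Phi_def Em100_eq Em110_eq)
qed

theorem mainTheorem12:
  fixes n :: nat and T :: "nat set"
  assumes "T \<subseteq> {1..n}"
  shows "card {e \<in> inv_seqs n. Em110 e = T} = card {e \<in> inv_seqs n. Em100 e = T}"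
proof -
  have x1: "B \<noteq> C" "A \<noteq> C" "B \<noteq> A" by auto
  have x2: "A \<noteq> C" "B \<noteq> C" "A \<noteq> B" by auto
  have "bij_betw (Phi B A) {e \<in> inv_seqs n. Em110 e = T} {e \<in> inv_seqs n. Em100 e = T}"
    by (rule bij_betw_byWitness[where f'="Phi A B"])
       (auto simp: Phi_inv[OF x1] Phi_inv[OF x2] Phi_in[OF x1] Phi_in[OF x2] Em_Phi1 Em_Phi2)
  then show ?thesis by (rule bij_betw_same_card)
qed


end
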